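(* Assume the standing hypotheses (H). For each $(t,\mathbf x)\in\mathbf D$, $$\widetilde g(t,\mathbf x)=-\Sigma\big(\phi^\star S^2\mathcal C_{SS}-(\beta\mathcal V_A+S^2\Gamma)\big)\widetilde\sigma-\Sigma\Big(\phi^\star S\mathcal C_{S\Sigma}-S\frac{\partial\Delta}{\partial\Sigma}\Big)\widetilde\eta-\frac12\big(\phi^\star\mathcal C_{\Sigma\Sigma}-\mathcal V_{\Sigma\Sigma}\big)\widetilde\xi,$$ where $(\widetilde\nu,\widetilde\sigma,\widetilde\eta,\widetilde\xi)=\widetilde{\boldsymbol\zeta}$, $\phi^\star=\mathcal V_\Sigma/\mathcal C_\Sigma$, and all functions are evaluated at $(t,\mathbf x)$.
   Context: Setting. Fix $T>0$, $S_0>0$, $\Sigma_0>0$, $A_0\in\mathbb R$. $\Omega$: continuous paths $\omega=(\omega^S,\omega^\Sigma,\omega^A):[0,T]\to\mathbb R^3$ with $\omega_0=(S_0,\Sigma_0,A_0)$ (uniform topology, Borel $\sigma$-algebra $\mathcal F$); $S,\Sigma,A$ coordinate processes, $\mathbb F$ their raw filtration, $M_t=\sup_{u\le t}S_u$, $\mathbf X_t=(S_t,A_t,M_t,\Sigma_t)$. $\mathbf G=\mathbb R_+\times\mathbb R\times\mathbb R_+$, $\mathbf D^0=(0,T)\times\mathbf G\times\mathbb R_+$ (points $(t,\mathbf x)$, $\mathbf x=(S,A,M,\Sigma)$); $0<\underline\Sigma<\Sigma_0<\overline\Sigma$, $\mathbf D=(0,T)\times\mathbf G\times[\underline\Sigma,\overline\Sigma]$.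 $\|\cdot\|$ Euclidean norm, $\mathbf e_4$ fourth unit vector, $x^-=\max(-x,0)$. Call: $\mathcal C(t,S,\Sigma)$ with $\mathcal C_t+\frac12\Sigma^2S^2\mathcal C_{SS}=0$, $\mathcal C(T_{\mathsf C},S,\Sigma)=\mathsf C(S)$. $b^{\mathcal C}(t,\mathbf x;\boldsymbol\zeta)=\nu\mathcal C_\Sigma+\frac12S^2\mathcal C_{SS}(\sigma^2-\Sigma^2)+\sigma\eta S\mathcal C_{S\Sigma}+\frac12(\eta^2+\xi)\mathcal C_{\Sigma\Sigma}$ for $\boldsymbol\zeta=(\nu,\sigma,\eta,\xi)$. Models: $\mathfrak P^{00}$ = probability measures $P$ on $(\Omega,\mathcal F)$ with progressively measurable $\boldsymbol\zeta^P=(\nu^P,\sigma^P,\eta^P,\xi^P)$ such that $S$, $\Sigma-\int_0^\cdot\nu^P_tdt$ are continuous local $P$-martingales with $d\langle S\rangle_t=S_t^2(\sigma^P_t)^2dt$, $d\langle\Sigma\rangle_t=((\eta^P_t)^2+\xi^P_t)dt$, $d\langle S,\Sigma\rangle_t=S_t\sigma^P_t\eta^P_tdt$, $S,\Sigma>0$, $\xi^P\ge0$, $b^{\mathcal C}(t,\mathbf X_t;\boldsymbol\zeta^P_t)=0$ $dt\times P$-a.e.; for Borel $\alpha,\beta,\gamma,\delta:[0,T]\times\mathbb R^3\to\mathbb R$, $\mathfrak P^0$ = those $P$ with $dA_t=(\alpha+\frac12(\sigma^P_t)^2\beta)dt+\gamma dS_t+\delta dM_t$. $\boldsymbol\zeta^0(\Sigma)=(0,\Sigma,0,0)^\top$;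 reference model: $\boldsymbol\zeta^P_t=\boldsymbol\zeta^0(\Sigma_t)$ a.e. Non-traded option: $\mathcal V(\cdot,\Sigma)$ solves $\mathcal V_t+(\alpha+\frac12\beta\Sigma^2)\mathcal V_A+\frac12\Sigma^2S^2(\mathcal V_{SS}+2\gamma\mathcal V_{SA}+\gamma^2\mathcal V_{AA})=0$ on $(0,T)\times\mathbf G$, $\delta\mathcal V_A+\mathcal V_M=0$ on $\{S\ge M\}$, $\mathcal V(T,\cdot,\Sigma)=\mathsf V$. $\Delta=\mathcal V_S+\gamma\mathcal V_A$, $\Gamma=\mathcal V_{SS}+2\gamma\mathcal V_{SA}+\gamma^2\mathcal V_{AA}$, $\frac{\partial\Delta}{\partial\Sigma}:=\mathcal V_{S\Sigma}+\gamma\mathcal V_{A\Sigma}$. P&L: $V_t=\mathcal V(t,\mathbf X_t)$, $C_t=\mathcal C(t,S_t,\Sigma_t)$; strategies $\boldsymbol\upsilon=(\theta,\phi)$ real locally bounded progressive; $Y^{\boldsymbol\upsilon,P}_t=Y_0+V_0+\int_0^t\theta dS+\int_0^t\phi dC-V_t$. Preferences: $\Psi=\mathrm{diag}(\psi_\nu,\psi_\sigma,\psi_\eta,\psi_\xi)$, positive; a utility $U$, strategy set $\mathfrak Y$, model set $\mathfrak P\subset\mathfrak P^0$. Candidate control: $\mathbf c=(\mathcal C_\Sigma,\Sigma S^2\mathcal C_{SS},\Sigma S\mathcal C_{S\Sigma},\frac12\mathcal C_{\Sigma\Sigma})^\top$, $\mathbf v=(\mathcal V_\Sigma,\Sigma(\beta\mathcal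 V_A+S^2\Gamma),\Sigma S\frac{\partial\Delta}{\partial\Sigma},\frac12\mathcal V_{\Sigma\Sigma})^\top$; $\lambda=\frac{\mathbf c^\top\Psi\mathbf v}{\mathbf c^\top\Psi\mathbf c}$ if $\mathcal V_{\Sigma\Sigma}-\frac{\mathbf c^\top\Psi\mathbf v}{\mathbf c^\top\Psi\mathbf c}\mathcal C_{\Sigma\Sigma}\ge0$, else $\lambda=\frac{\mathbf c^\top\Psi\mathbf v-\frac14\mathcal C_{\Sigma\Sigma}\mathcal V_{\Sigma\Sigma}\psi_\xi}{\mathbf c^\top\Psi\mathbf c-\frac14\mathcal C_{\Sigma\Sigma}^2\psi_\xi}$; $\mu=\frac12(\mathcal V_{\Sigma\Sigma}-\lambda\mathcal C_{\Sigma\Sigma})^-$; $\widetilde{\boldsymbol\zeta}=\Psi(\mathbf v-\lambda\mathbf c+\mu\mathbf e_4)$; $\boldsymbol\zeta^\psi=\boldsymbol\zeta^0(\Sigma)+\widetilde{\boldsymbol\zeta}\mathbf 1_{\{\underline\Sigma<\Sigma<\overline\Sigma\}}\psi$; $\widetilde g=\mathbf v^\top\widetilde{\boldsymbol\zeta}$. Cash-equivalent PDE: for $\Sigma\in[\underline\Sigma,\overline\Sigma]$, $\widetilde w_t+(\alpha+\frac12\beta\Sigma^2)\widetilde w_A+\frac12\Sigma^2S^2(\widetilde w_{SS}+2\gamma\widetilde w_{SA}+\gamma^2\widetilde w_{AA})+\frac12\widetilde g(\cdot,\Sigma)=0$ on $(0,T)\times\mathbf G$, $\delta\widetilde w_A+\widetilde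 w_M=0$ on $\{S\ge M\}$, $\widetilde w(T,\cdot,\Sigma)=0$. $L^p_{\mathfrak P}$: Borel $K$ on $\mathbf D^0$ with $\sup_{P\in\mathfrak P}E^P[\int_0^T|K(t,\mathbf X_t)|^pdt]^{1/p}<\infty$. Candidate asymptotic model family: $(P^\psi)_{\psi\in(0,\psi_0)}\subset\mathfrak P$, $\psi_0\in(0,1)$, with $K_0\in L^4_{\mathfrak P}$ and $\|\boldsymbol\zeta^{P^\psi}_t-\boldsymbol\zeta^\psi(t,\mathbf X_t)\|\le K_0(t,\mathbf X_t)\psi^2$ $dt\times P^\psi$-a.e. Assumption (A): (a) $\exists K_{\mathfrak Y}$: $Y^{\boldsymbol\upsilon,P}>-K_{\mathfrak Y}$ $dt\times P$-a.e. for all $\boldsymbol\upsilon\in\mathfrak Y$, $P\in\mathfrak P$; (b) $\mathfrak P$ contains a candidate asymptotic model family and a reference model, and constants $\underline\nu<0<\overline\nu$, $0<\underline\sigma<\underline\Sigma$, $\overline\Sigma<\overline\sigma$, $\underline\eta<0<\overline\eta$, $\overline\xi>0$ bound $\nu^P,\sigma^P,\eta^P,\xi^P,\Sigma$ in $[\underline\nu,\overline\nu],[\underline\sigma,\overline\sigma],[\underline\eta,\overline\eta],[0,\overline\xi],[\underline\Sigma,\overline\Sigma]$ $dt\times P$-a.e. for all $P\in\mathfrak P$; (c) $T_{\mathsf C}\ge T$, $\mathcal C\in C^{1,2,2}((0,T_{\mathsf C})\times\mathbb R_+^2)\cap C([0,T_{\mathsf C}]\times\overline{\mathbb R}_+^2)$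 solves the call PDE classically for $\Sigma\in[\underline\Sigma,\overline\Sigma]$, $\mathcal C_\Sigma\ne0$ and $|\mathcal C_{\Sigma\Sigma}|\le K_{\mathcal C}(|\mathcal C_\Sigma|+|S^2\mathcal C_{SS}|+|S\mathcal C_{S\Sigma}|)$ on $(0,T)\times\mathbb R_+\times[\underline\Sigma,\overline\Sigma]$ with $K_{\mathcal C}\in L^2_{\mathfrak P}$; (d) $\mathcal V\in C^{1,2,2,1,2}(\mathbf D^0)\cap C(\overline{\mathbf D^0})$ solves the $\mathcal V$-PDE classically for $\Sigma\in[\underline\Sigma,\overline\Sigma]$, $|\mathcal V_\Sigma|,|\beta\mathcal V_A+S^2\Gamma|,|S\frac{\partial\Delta}{\partial\Sigma}|,|\mathcal V_{\Sigma\Sigma}|\le K_{\mathcal V}$ on $\mathbf D$; (e) $\widetilde w\in C^{1,2,2,1,2}(\mathbf D^0)\cap C(\overline{\mathbf D^0})$ solves the cash-equivalent PDE classically for $\Sigma\in[\underline\Sigma,\overline\Sigma]$, $0\le\widetilde w\le K_{\widetilde w}$ on $\mathbf D$, and $\widetilde w_\Sigma,S(\widetilde w_S+\gamma\widetilde w_A),\beta\widetilde w_A+S^2(\widetilde w_{SS}+2\gamma\widetilde w_{SA}+\gamma^2\widetilde w_{AA}),S(\widetilde w_{S\Sigma}+\gamma\widetilde w_{A\Sigma}),\widetilde w_{\Sigma\Sigma}\in L^4_{\mathfrak P}$; (f) $U\in C^3(\mathbb R)$, $U'>0$, $U''<0$, $-U''/U'$ nonincreasing. Delta-vega hedge $\boldsymbol\upsilon^\star_t=(\Delta-\frac{\mathcal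 V_\Sigma}{\mathcal C_\Sigma}\mathcal C_S,\frac{\mathcal V_\Sigma}{\mathcal C_\Sigma})(t,\mathbf X_t)$. Standing hypotheses (H): Assumption (A) holds, $\boldsymbol\upsilon^\star\in\mathfrak Y$, and $(P^\psi)_{\psi\in(0,\psi_0)}\subset\mathfrak P$ is a candidate asymptotic model family. *)

theory Defs
  imports "HOL-Analysis.Analysis"
begin

text \<open>Call price C(t,S,Sigma).\<close>
definition C_t where "C_t C t S s = deriv (\<lambda>u. C u S s) t"
definition C_S where "C_S C t S s = deriv (\<lambda>x. C t x s) S"
definition C_Sig where "C_Sig C t S s = deriv (\<lambda>y. C t S y) s"
definition C_SS where "C_SS C t S s = deriv (\<lambda>x. C_S C t x s) S"
definition C_SSig where "C_SSig C t S s = deriv (\<lambda>y. C_S C t S y) s"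
definition C_SigSig where "C_SigSig C t S s = deriv (\<lambda>y. C_Sig C t S y) s"

text \<open>Non-traded option value V(t,S,A,M,Sigma).\<close>
definition V_t where "V_t V t S A M s = deriv (\<lambda>u. V u S A M s) t"
definition V_S where "V_S V t S A M s = deriv (\<lambda>x. V t x A M s) S"
definition V_A where "V_A V t S A M s = deriv (\<lambda>a. V t S a M s) A"
definition V_M where "V_M V t S A M s = deriv (\<lambda>m. V t S A m s) M"
definition V_Sig where "V_Sig V t S A M s = deriv (\<lambda>y. V t S A M y) s"
definition V_SS where "V_SS V t S A M s = deriv (\<lambda>x. V_S V t x A M s) S"
definition V_SA where "V_SA V t S A M s = deriv (\<lambda>a. V_S V t S a M s) A"
definition V_AA where "V_AA V t S A M s = deriv (\<lambda>a. V_A V t S a M s) A"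
definition V_SSig where "V_SSig V t S A M s = deriv (\<lambda>y. V_S V t S A M y) s"
definition V_ASig where "V_ASig V t S A M s = deriv (\<lambda>y. V_A V t S A M y) s"
definition V_SigSig where "V_SigSig V t S A M s = deriv (\<lambda>y. V_Sig V t S A M y) s"

definition Delta where
  "Delta V gam t S A M s = V_S V t S A M s + gam t S A M * V_A V t S A M s"
definition Gamma where
  "Gamma V gam t S A M s = V_SS V t S A M s + 2 * gam t S A M * V_SA V t S A M s
     + (gam t S A M)\<^sup>2 * V_AA V t S A M s"
definition dDelta_dSig where
  "dDelta_dSig V gam t S A M s = V_SSig V t S A M s + gam t S A M * V_ASig V t S A M s"

text \<open>psi = (psi_nu, psi_sigma, psi_eta, psi_xi), Psi = diag psi.\<close>
definition Psi_mul :: "real^4 \<Rightarrow> real^4 \<Rightarrow> real^4" where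
  "Psi_mul psi x = (\<chi> i. psi $ i * x $ i)"

definition e4 :: "real^4" where "e4 = vector [0, 0, 0, 1]"

definition cvec :: "_ \<Rightarrow> real \<Rightarrow> real \<Rightarrow> real \<Rightarrow> real^4" where
  "cvec C t S s = vector [C_Sig C t S s, s * S\<^sup>2 * C_SS C t S s, s * S * C_SSig C t S s,
                          C_SigSig C t S s / 2]"

definition vvec :: "_ \<Rightarrow> _ \<Rightarrow> _ \<Rightarrow> real \<Rightarrow> real \<Rightarrow> real \<Rightarrow> real \<Rightarrow> real \<Rightarrow> real^4" where
  "vvec V bet gam t S A M s = vector [V_Sig V t S A M s,
      s * (bet t S A M * V_A V t S A M s + S\<^sup>2 * Gamma V gam t S A M s),
      s * S * dDelta_dSig V gam t S A M s,
      V_SigSig V t S A M s / 2]"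

definition lam where
  "lam psi C V bet gam t S A M s =
    (let c = cvec C t S s; v = vvec V bet gam t S A M s;
         CSS = C_SigSig C t S s; VSS = V_SigSig V t S A M s;
         a = c \<bullet> Psi_mul psi v; b = c \<bullet> Psi_mul psi c
     in if VSS - (a / b) * CSS \<ge> 0 then a / b
        else (a - CSS * VSS * psi $ 4 / 4) / (b - CSS\<^sup>2 * psi $ 4 / 4))"

definition negpart :: "real \<Rightarrow> real" where "negpart x = max (- x) 0"

definition mu where
  "mu psi C V bet gam t S A M s =
     negpart (V_SigSig V t S A M s - lam psi C V bet gam t S A M s * C_SigSig C t S s) / 2"

definition zeta_tilde :: "real^4 \<Rightarrow> _ \<Rightarrow> _ \<Rightarrow> _ \<Rightarrow> _ \<Rightarrow> real \<Rightarrow> real \<Rightarrow> real \<Rightarrow> real \<Rightarrow> real \<Rightarrow> real^4" where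
  "zeta_tilde psi C V bet gam t S A M s =
     Psi_mul psi (vvec V bet gam t S A M s - lam psi C V bet gam t S A M s *\<^sub>R cvec C t S s
                  + mu psi C V bet gam t S A M s *\<^sub>R e4)"

definition g_tilde where
  "g_tilde psi C V bet gam t S A M s =
     vvec V bet gam t S A M s \<bullet> zeta_tilde psi C V bet gam t S A M s"

end

theory Submission
  imports Defs
begin

lemma inner4: "(x::real^4) \<bullet> y = x $ 1*y $ 1 + x $ 2*y $ 2 + x $ 3*y $ 3 + x $ 4*y $ 4"
  unfolding inner_vec_def by (simp add: sum_4)

lemma vec4: "vector [a,b,c,d] $ (1::4) = (a::real)" "vector [a,b,c,d] $ (2::4) = b"
 "vector [a,b,c,d] $ (3::4) = c" "vector [a,b,c,d] $ (4::4) = d"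
  by (simp_all add: vector_def)

lemma key:
  fixes p c v :: "real^4" and l m :: real
  assumes p: "\<forall>i. 0 < p $ i" and c1: "c $ 1 \<noteq> 0"
    and l: "l = (let a = c \<bullet> Psi_mul p v; b = c \<bullet> Psi_mul p c
     in if 2 * v $ 4 - (a / b) * (2 * c $ 4) \<ge> 0 then a / b
        else (a - (2* c $ 4) * (2* v $ 4) * p $ 4 / 4) / (b - (2* c $ 4)\<^sup>2 * p $ 4 / 4))"
    and m: "m = negpart (2* v $ 4 - l * (2* c $ 4)) / 2"
  shows "c \<bullet> Psi_mul p (v - l *\<^sub>R c + m *\<^sub>R e4) = 0"
proof -
  have pos: "0 < p $ 1 * (c $ 1)^2" using p c1 by simp
  have n2: "0 \<le> p $ 2 * (c $ 2)^2" "0 \<le> p $ 3 * (c $ 3)^2" "0 \<le> p $ 4 * (c $ 4)^2"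
    using p by (simp_all add: less_imp_le)
  define a where "a = c \<bullet> Psi_mul p v"
  define b where "b = c \<bullet> Psi_mul p c"
  have a: "a = c $ 1* p $ 1* v $ 1 + c $ 2* p $ 2* v $ 2 + c $ 3* p $ 3* v $ 3 + c $ 4* p $ 4* v $ 4"
    unfolding a_def inner4 Psi_mul_def by simp
  have b: "b = p $ 1*(c $ 1)^2 + p $ 2*(c $ 2)^2 + p $ 3*(c $ 3)^2 + p $ 4*(c $ 4)^2"
    unfolding b_def inner4 Psi_mul_def by (simp add: power2_eq_square algebra_simps)
  have bpos: "b > 0" using pos n2 b by linarith
  have b2: "b - (2* c $ 4)\<^sup>2 * p $ 4 / 4 > 0" using pos n2 b by (simp add: power2_eq_square)
  have E: "c \<bullet> Psi_mul p (v - l *\<^sub>R c + m *\<^sub>R e4) = a - l * b + m * p $ 4 * c $ 4"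
    unfolding a b inner4 Psi_mul_def e4_def by (simp add: vec4 algebra_simps power2_eq_square)
  show ?thesis
  proof (cases "2 * v $ 4 - (a / b) * (2 * c $ 4) \<ge> 0")
    case True
    then have "l = a/b" using l unfolding a_def b_def by (simp add: Let_def)
    moreover have "m = 0" using True m \<open>l = a/b\<close> by (simp add: negpart_def)
    ultimately show ?thesis using E bpos by simp
  next
    case False
    then have ll: "l = (a - (2* c $ 4) * (2* v $ 4) * p $ 4 / 4) / (b - (2* c $ 4)\<^sup>2 * p $ 4 / 4)"
      using l unfolding a_def b_def by (simp add: Let_def)
    show ?thesis
    proof (cases "2* v $ 4 - l * (2* c $ 4) \<ge> 0")
      case True
      then have "m = 0" using m by (simp add: negpart_def)
      have "l * (b - (2* c $ 4)\<^sup>2 * p $ 4 / 4) = a - (2* c $ 4) * (2* v $ 4) * p $ 4 / 4"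
        using ll b2 by simp
      have r: "2 * v $ 4 * b - a * (2 * c $ 4) < 0" using False bpos
        by (simp add: field_simps)
      have e: "l*b + c $ 4* p $ 4* v $ 4 - (a + l*(c $ 4)^2* p $ 4) = 0"
        using ll b2 by (simp add: field_simps power2_eq_square)
      have "(2* v $ 4 - l * (2* c $ 4)) * (b - (2* c $ 4)\<^sup>2 * p $ 4 / 4) - (2 * v $ 4 * b - a * (2 * c $ 4))
         = -2* c $ 4*(l*b + c $ 4* p $ 4* v $ 4 - (a + l*(c $ 4)^2* p $ 4))"
        by (simp add: algebra_simps power2_eq_square)
      hence "(2* v $ 4 - l * (2* c $ 4)) * (b - (2* c $ 4)\<^sup>2 * p $ 4 / 4) = 2 * v $ 4 * b - a * (2 * c $ 4)"
        using e by simp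
      hence "(2* v $ 4 - l * (2* c $ 4)) * (b - (2* c $ 4)\<^sup>2 * p $ 4 / 4) < 0" using r by simp
      moreover have "(2* v $ 4 - l * (2* c $ 4)) * (b - (2* c $ 4)\<^sup>2 * p $ 4 / 4) \<ge> 0"
        using True b2 by simp
      ultimately show ?thesis by simp
    next
      case F2: False
      then have mm: "m = (l * (2* c $ 4) - 2* v $ 4)/2" using m by (simp add: negpart_def)
      have e: "l*b + c $ 4* p $ 4* v $ 4 - (a + l*(c $ 4)^2* p $ 4) = 0"
        using ll b2 by (simp add: field_simps power2_eq_square)
      have "a - l * b + m * p $ 4 * c $ 4 = - (l*b + c $ 4* p $ 4* v $ 4 - (a + l*(c $ 4)^2* p $ 4))"
        unfolding mm by (simp add: field_simps power2_eq_square)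
      then show ?thesis using E e by simp
    qed
  qed
qed

theorem corollary5p7:
  fixes T TC S0 Sig0 Sig_lo Sig_hi :: real
    and psi :: "real^4"
    and C :: "real \<Rightarrow> real \<Rightarrow> real \<Rightarrow> real"
    and Cpay :: "real \<Rightarrow> real"
    and V :: "real \<Rightarrow> real \<Rightarrow> real \<Rightarrow> real \<Rightarrow> real \<Rightarrow> real"
    and Vpay :: "real \<Rightarrow> real \<Rightarrow> real \<Rightarrow> real"
    and alp bet gam del :: "real \<Rightarrow> real \<Rightarrow> real \<Rightarrow> real \<Rightarrow> real"
    and K_V :: real
  assumes "0 < T" and "0 < S0"
    and "0 < Sig_lo" and "Sig_lo < Sig0" and "Sig0 < Sig_hi"
    and psi_pos: "\<forall>i. 0 < psi $ i"
    and "T \<le> TC"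
    and C_pde: "\<forall>t S s. 0 < t \<and> t < TC \<and> 0 < S \<and> Sig_lo \<le> s \<and> s \<le> Sig_hi \<longrightarrow>
                  C_t C t S s + s\<^sup>2 * S\<^sup>2 * C_SS C t S s / 2 = 0"
    and C_term: "\<forall>S s. C TC S s = Cpay S"
    and C_vega: "\<forall>t S s. 0 < t \<and> t < T \<and> 0 < S \<and> Sig_lo \<le> s \<and> s \<le> Sig_hi \<longrightarrow>
                  C_Sig C t S s \<noteq> 0"
    and V_pde: "\<forall>t S A M s. 0 < t \<and> t < T \<and> 0 < S \<and> 0 < M \<and> Sig_lo \<le> s \<and> s \<le> Sig_hi \<longrightarrow>
                  V_t V t S A M s + (alp t S A M + bet t S A M * s\<^sup>2 / 2) * V_A V t S A M s
                  + s\<^sup>2 * S\<^sup>2 * Gamma V gam t S A M s / 2 = 0"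
    and V_bdry: "\<forall>t S A M s. 0 < t \<and> t < T \<and> 0 < S \<and> 0 < M \<and> S \<ge> M
                  \<and> Sig_lo \<le> s \<and> s \<le> Sig_hi \<longrightarrow>
                  del t S A M * V_A V t S A M s + V_M V t S A M s = 0"
    and V_term: "\<forall>S A M s. V T S A M s = Vpay S A M"
    and V_bounds: "\<forall>t S A M s. 0 < t \<and> t < T \<and> 0 < S \<and> 0 < M \<and> Sig_lo \<le> s \<and> s \<le> Sig_hi \<longrightarrow>
                  \<bar>V_Sig V t S A M s\<bar> \<le> K_V
                  \<and> \<bar>bet t S A M * V_A V t S A M s + S\<^sup>2 * Gamma V gam t S A M s\<bar> \<le> K_V
                  \<and> \<bar>S * dDelta_dSig V gam t S A M s\<bar> \<le> K_V
                  \<and> \<bar>V_SigSig V t S A M s\<bar> \<le> K_V"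
  shows "\<forall>t S A M s. 0 < t \<and> t < T \<and> 0 < S \<and> 0 < M \<and> Sig_lo \<le> s \<and> s \<le> Sig_hi \<longrightarrow>
    (let zt = zeta_tilde psi C V bet gam t S A M s;
         phi = V_Sig V t S A M s / C_Sig C t S s
     in g_tilde psi C V bet gam t S A M s =
          - s * (phi * S\<^sup>2 * C_SS C t S s
                 - (bet t S A M * V_A V t S A M s + S\<^sup>2 * Gamma V gam t S A M s)) * zt $ 2
          - s * (phi * S * C_SSig C t S s - S * dDelta_dSig V gam t S A M s) * zt $ 3
          - (phi * C_SigSig C t S s - V_SigSig V t S A M s) * zt $ 4 / 2)"
proof (intro allI impI)
  fix t S A M s :: real
  assume h: "0 < t \<and> t < T \<and> 0 < S \<and> 0 < M \<and> Sig_lo \<le> s \<and> s \<le> Sig_hi"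
  define c where "c = cvec C t S s"
  define v where "v = vvec V bet gam t S A M s"
  define l where "l = lam psi C V bet gam t S A M s"
  define m where "m = mu psi C V bet gam t S A M s"
  define z where "z = zeta_tilde psi C V bet gam t S A M s"
  define ph where "ph = V_Sig V t S A M s / C_Sig C t S s"
  have cs: "C_Sig C t S s \<noteq> 0" using C_vega h by blast
  have c1: "c $ 1 = C_Sig C t S s" "c $ 2 = s * S\<^sup>2 * C_SS C t S s" "c $ 3 = s * S * C_SSig C t S s"
     "c $ 4 = C_SigSig C t S s / 2" unfolding c_def cvec_def by (simp_all add: vec4)
  have v1: "v $ 1 = V_Sig V t S A M s"
     "v $ 2 = s * (bet t S A M * V_A V t S A M s + S\<^sup>2 * Gamma V gam t S A M s)"
     "v $ 3 = s * S * dDelta_dSig V gam t S A M s" "v $ 4 = V_SigSig V t S A M s / 2"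
    unfolding v_def vvec_def by (simp_all add: vec4)
  have lk: "l = (let a = c \<bullet> Psi_mul psi v; b = c \<bullet> Psi_mul psi c
     in if 2 * v $ 4 - (a / b) * (2 * c $ 4) \<ge> 0 then a / b
        else (a - (2* c $ 4) * (2* v $ 4) * psi $ 4 / 4) / (b - (2* c $ 4)\<^sup>2 * psi $ 4 / 4))"
    unfolding l_def lam_def c_def[symmetric] v_def[symmetric] Let_def
    using c1(4) v1(4) by (simp add: field_simps)
  have mk: "m = negpart (2* v $ 4 - l * (2* c $ 4)) / 2"
    unfolding m_def mu_def l_def[symmetric] using c1(4) v1(4) by (simp add: mult.commute)
  have zk: "z = Psi_mul psi (v - l *\<^sub>R c + m *\<^sub>R e4)"
    unfolding z_def zeta_tilde_def c_def v_def l_def m_def ..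
  have K: "c \<bullet> z = 0" unfolding zk
    by (rule key[OF psi_pos _ lk mk]) (simp add: c1 cs)
  have g: "g_tilde psi C V bet gam t S A M s = v \<bullet> z" unfolding g_tilde_def v_def z_def ..
  have "v \<bullet> z = v \<bullet> z - ph * (c \<bullet> z)" using K by simp
  also have "... = (v $ 1 - ph* c $ 1)*z $ 1 + (v $ 2 - ph* c $ 2)*z $ 2 + (v $ 3 - ph* c $ 3)*z $ 3 + (v $ 4 - ph* c $ 4)*z $ 4"
    unfolding inner4 by (simp add: algebra_simps)
  also have "v $ 1 - ph* c $ 1 = 0" using cs unfolding v1 c1 ph_def by simp
  finally have fin: "v \<bullet> z = (v $ 2 - ph* c $ 2)*z $ 2 + (v $ 3 - ph* c $ 3)*z $ 3 + (v $ 4 - ph* c $ 4)*z $ 4" by simp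
  show "let zt = zeta_tilde psi C V bet gam t S A M s;
         phi = V_Sig V t S A M s / C_Sig C t S s
     in g_tilde psi C V bet gam t S A M s =
          - s * (phi * S\<^sup>2 * C_SS C t S s
                 - (bet t S A M * V_A V t S A M s + S\<^sup>2 * Gamma V gam t S A M s)) * zt $ 2
          - s * (phi * S * C_SSig C t S s - S * dDelta_dSig V gam t S A M s) * zt $ 3
          - (phi * C_SigSig C t S s - V_SigSig V t S A M s) * zt $ 4 / 2"
    unfolding Let_def z_def[symmetric] ph_def[symmetric] g fin
    by (simp add: v1 c1 field_simps)
qed

end
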